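(* Let $G=(V,E)$ be a finite connected multigraph, $\mathscr H$ its exchange graph, $\mathscr H_0$ a connected component of $\mathscr H$ with vertex set $\mathscr V_0$, and $G_0$ the spanning subgraph of $G$ associated to $\mathscr H_0$. Let $X\subseteq V$ be saturated with respect to $G_0$. Then for every vertex $(A,B)\in\mathscr V_0$, the induced subgraphs $A[X]$ and $B[X]$ are edge-disjoint trees with vertex set $X$.
   Context: A spanning tree of $G$ is a subgraph with vertex set $V$ that is a tree; a spanning 2-forest is a subgraph with vertex set $V$, without cycles, with exactly two connected components. $\mathcal{ST}(G)$ and $\mathcal{SF}_2(G)$ denote the sets of these. For a spanning subgraph $G'$ and an edge $e\notin E(G')$, $G'+e$ is the spanning subgraph with edge set $E(G')\cup\{e\}$; for $e\in E(G')$, $G'-e$ has edge set $E(G')\setminus\{e\}$. The exchange graph $\mathscr H$ of $G$ is the bipartite graph with vertex set $\mathscr V_1\sqcup\mathscr V_2$, where $\mathscr V_1=\{(F,T): F\in\mathcal{SF}_2(G),T\in\mathcal{ST}(G),E(F)\cap E(T)=\emptyset\}$ and $\mathscr V_2=\{(T,F):T\in\mathcal{ST}(G),F\in\mathcal{SF}_2(G),E(F)\cap E(T)=\emptyset\}$; $(F,T)\in\mathscr V_1$ is adjacent to $(T',F')\in\mathscr V_2$ iff there is an edge $e\in E(T)$ with $F'=T-e$ and $T'=F+e$. For a connected component $\mathscr H_0$ of $\mathscr H$, the set $E(A)\cup E(B)$ is the same for all vertices $(A,B)$ of $\mathscr H_0$; the associated spanning subgraph $G_0$ is the spanning subgraph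 of $G$ with this edge set. For $X\subseteq V$ and a (spanning) subgraph $K$, $K[X]$ denotes the induced subgraph on $X$ (vertex set $X$, edges of $K$ with both endpoints in $X$). A subset $X\subseteq V$ is saturated with respect to $G_0$ if $G_0[X]$ has exactly $2|X|-2$ edges. *)

theory Defs
  imports Main
begin

text \<open>A finite multigraph is given by a vertex set V, an edge set E (edges are abstract
objects of type 'e, so parallel edges are allowed) and an endpoint map: each edge has
one (loop) or two endpoints in V. Spanning subgraphs are identified with their edge sets.\<close>

definition multigraph :: "'v set \<Rightarrow> 'e set \<Rightarrow> ('e \<Rightarrow> 'v set) \<Rightarrow> bool" where
  "multigraph V E ends \<longleftrightarrow> finite V \<and> finite E \<and>
     (\<forall>e\<in>E. ends e \<subseteq> V \<and> ends e \<noteq> {} \<and> card (ends e) \<le> 2)"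

definition reach :: "('e \<Rightarrow> 'v set) \<Rightarrow> 'e set \<Rightarrow> 'v set \<Rightarrow> ('v \<times> 'v) set" where
  "reach ends F X = {(u, w). u \<in> X \<and> w \<in> X \<and>
     (u, w) \<in> ({(a, b). a \<in> X \<and> b \<in> X \<and> (\<exists>e\<in>F. ends e = {a, b})})\<^sup>*}"

definition connected_on :: "('e \<Rightarrow> 'v set) \<Rightarrow> 'e set \<Rightarrow> 'v set \<Rightarrow> bool" where
  "connected_on ends F X \<longleftrightarrow> X \<noteq> {} \<and> (\<forall>u\<in>X. \<forall>w\<in>X. (u, w) \<in> reach ends F X)"

definition num_components :: "('e \<Rightarrow> 'v set) \<Rightarrow> 'e set \<Rightarrow> 'v set \<Rightarrow> nat" where
  "num_components ends F X = card (X // reach ends F X)"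

text \<open>A cycle: distinct edges e_0..e_(k-1) (k>=1) and distinct vertices v_0..v_(k-1) with
ends e_i = {v_i, v_(i+1 mod k)} (k=1: loop, k=2: pair of parallel edges).\<close>
definition has_cycle :: "('e \<Rightarrow> 'v set) \<Rightarrow> 'e set \<Rightarrow> bool" where
  "has_cycle ends F \<longleftrightarrow> (\<exists>es vs. es \<noteq> [] \<and> length vs = length es \<and> distinct es \<and>
     distinct vs \<and> set es \<subseteq> F \<and>
     (\<forall>i<length es. ends (es ! i) = {vs ! i, vs ! ((i + 1) mod length es)}))"

definition is_subgraph_on :: "('e \<Rightarrow> 'v set) \<Rightarrow> 'e set \<Rightarrow> 'v set \<Rightarrow> bool" where
  "is_subgraph_on ends F X \<longleftrightarrow> (\<forall>e\<in>F. ends e \<subseteq> X)"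

definition is_tree :: "('e \<Rightarrow> 'v set) \<Rightarrow> 'e set \<Rightarrow> 'v set \<Rightarrow> bool" where
  "is_tree ends F X \<longleftrightarrow> is_subgraph_on ends F X \<and> \<not> has_cycle ends F \<and> connected_on ends F X"

definition spanning_trees :: "'v set \<Rightarrow> 'e set \<Rightarrow> ('e \<Rightarrow> 'v set) \<Rightarrow> 'e set set" where
  "spanning_trees V E ends = {T. T \<subseteq> E \<and> is_tree ends T V}"

definition spanning_2forests :: "'v set \<Rightarrow> 'e set \<Rightarrow> ('e \<Rightarrow> 'v set) \<Rightarrow> 'e set set" where
  "spanning_2forests V E ends = {F. F \<subseteq> E \<and> \<not> has_cycle ends F \<and> num_components ends F V = 2}"

definition induced :: "('e \<Rightarrow> 'v set) \<Rightarrow> 'e set \<Rightarrow> 'v set \<Rightarrow> 'e set" where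
  "induced ends K X = {e \<in> K. ends e \<subseteq> X}"

text \<open>Exchange graph: vertices Inl (F,T) form V_1, vertices Inr (T,F) form V_2.\<close>
type_synonym 'e exvert = "('e set \<times> 'e set) + ('e set \<times> 'e set)"

definition exch_verts :: "'v set \<Rightarrow> 'e set \<Rightarrow> ('e \<Rightarrow> 'v set) \<Rightarrow> 'e exvert set" where
  "exch_verts V E ends =
     {Inl (F, T) | F T. F \<in> spanning_2forests V E ends \<and> T \<in> spanning_trees V E ends \<and> F \<inter> T = {}} \<union>
     {Inr (T, F) | T F. T \<in> spanning_trees V E ends \<and> F \<in> spanning_2forests V E ends \<and> F \<inter> T = {}}"

definition exch_adj12 :: "'e set \<times> 'e set \<Rightarrow> 'e set \<times> 'e set \<Rightarrow> bool" where
  "exch_adj12 p q \<longleftrightarrow> (case p of (F, T) \<Rightarrow> case q of (T', F') \<Rightarrow>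
      (\<exists>e\<in>T. F' = T - {e} \<and> T' = F \<union> {e}))"

definition exch_edges :: "'v set \<Rightarrow> 'e set \<Rightarrow> ('e \<Rightarrow> 'v set) \<Rightarrow> ('e exvert \<times> 'e exvert) set" where
  "exch_edges V E ends =
     {(Inl p, Inr q) | p q. Inl p \<in> exch_verts V E ends \<and> Inr q \<in> exch_verts V E ends \<and> exch_adj12 p q} \<union>
     {(Inr q, Inl p) | p q. Inl p \<in> exch_verts V E ends \<and> Inr q \<in> exch_verts V E ends \<and> exch_adj12 p q}"

definition exch_component :: "'v set \<Rightarrow> 'e set \<Rightarrow> ('e \<Rightarrow> 'v set) \<Rightarrow> 'e exvert \<Rightarrow> 'e exvert set" where
  "exch_component V E ends h0 = {h \<in> exch_verts V E ends. (h0, h) \<in> (exch_edges V E ends)\<^sup>*}"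

definition vpair :: "'e exvert \<Rightarrow> 'e set \<times> 'e set" where
  "vpair h = (case h of Inl p \<Rightarrow> p | Inr p \<Rightarrow> p)"

text \<open>Edge set E(A) \<union> E(B) of the associated spanning subgraph G_0 (constant on a component).\<close>
definition assoc_edges :: "'e exvert \<Rightarrow> 'e set" where
  "assoc_edges h = fst (vpair h) \<union> snd (vpair h)"

definition saturated :: "('e \<Rightarrow> 'v set) \<Rightarrow> 'e set \<Rightarrow> 'v set \<Rightarrow> bool" where
  "saturated ends E0 X \<longleftrightarrow> int (card (induced ends E0 X)) = 2 * int (card X) - 2"

end

theory Submission
  imports Defs
begin

definition spath :: "('e \<Rightarrow> 'v set) \<Rightarrow> 'e set \<Rightarrow> 'v list \<Rightarrow> 'e list \<Rightarrow> bool" where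
  "spath ends F vs es \<longleftrightarrow> length vs = Suc (length es) \<and> distinct vs \<and> distinct es \<and>
     set es \<subseteq> F \<and> (\<forall>i<length es. ends (es ! i) = {vs ! i, vs ! Suc i})"

lemma path_exists:
  assumes "(u, w) \<in> ({(a, b). a \<in> X \<and> b \<in> X \<and> (\<exists>e\<in>F. ends e = {a, b})})\<^sup>*"
  shows "\<exists>vs es. spath ends F vs es \<and> hd vs = u \<and> last vs = w"
  using assms
proof (induction rule: rtrancl_induct)
  case base
  show ?case by (rule exI[of _ "[u]"], rule exI[of _ "[]"]) (simp add: spath_def)
next
  case (step y z)
  then obtain vs es where p: "spath ends F vs es" "hd vs = u" "last vs = y" by blast
  from step(2) obtain e' where e': "e' \<in> F" "ends e' = {y, z}" by blast
  have len: "length vs = Suc (length es)" using p(1) by (simp add: spath_def)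
  show ?case
  proof (cases "z \<in> set vs")
    case True
    then obtain i where i: "i < length vs" "vs ! i = z" by (auto simp: in_set_conv_nth)
    have "spath ends F (take (Suc i) vs) (take i es)"
      using p(1) i len unfolding spath_def
      by (auto simp: min_def dest: in_set_takeD)
    moreover have "hd (take (Suc i) vs) = u" using p(2) i by (cases vs) auto
    moreover have "last (take (Suc i) vs) = z" using i
      by (subst last_conv_nth) (auto simp: min_def intro: arg_cong[where f="(!) vs"])
    ultimately show ?thesis by blast
  next
    case False
    have nin: "e' \<notin> set es"
    proof
      assume "e' \<in> set es"
      then obtain j where j: "j < length es" "es ! j = e'" by (auto simp: in_set_conv_nth)
      then have "ends e' = {vs ! j, vs ! Suc j}" using p(1) by (auto simp: spath_def)
      then have "z \<in> {vs ! j, vs ! Suc j}" using e' by auto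
      moreover have "vs ! j \<in> set vs" "vs ! Suc j \<in> set vs" using j len by auto
      ultimately show False using False by auto
    qed
    have lastv: "vs ! length es = y" using p(3) len
      by (metis diff_Suc_1 last_conv_nth list.size(3) nat.distinct(1))
    have "spath ends F (vs @ [z]) (es @ [e'])"
      unfolding spath_def
    proof (intro conjI allI impI)
      show "length (vs @ [z]) = Suc (length (es @ [e']))" using len by simp
      show "distinct (vs @ [z])" using p(1) False by (simp add: spath_def)
      show "distinct (es @ [e'])" using p(1) nin by (simp add: spath_def)
      show "set (es @ [e']) \<subseteq> F" using p(1) e' by (simp add: spath_def)
      fix j assume j: "j < length (es @ [e'])"
      show "ends ((es @ [e']) ! j) = {(vs @ [z]) ! j, (vs @ [z]) ! Suc j}"
      proof (cases "j < length es")
        case True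
        then show ?thesis using p(1) len by (simp add: spath_def nth_append)
      next
        case False
        then have "j = length es" using j by simp
        then show ?thesis using len lastv e' by (simp add: nth_append)
      qed
    qed
    moreover have "hd (vs @ [z]) = u" using p(2) len by (cases vs) auto
    moreover have "last (vs @ [z]) = z" by simp
    ultimately show ?thesis by blast
  qed
qed

lemma cycle_from_path:
  assumes "e \<notin> F" "ends e = {a, b}" "a \<noteq> b" "spath ends F vs es" "hd vs = b" "last vs = a"
  shows "has_cycle ends (insert e F)"
proof -
  have len: "length vs = Suc (length es)" and d: "distinct vs" "distinct es" and s: "set es \<subseteq> F"
    and ed: "\<forall>i<length es. ends (es ! i) = {vs ! i, vs ! Suc i}"
    using assms(4) by (auto simp: spath_def)
  have lastv: "vs ! length es = a" using assms(6) len
    by (metis diff_Suc_1 last_conv_nth list.size(3) nat.distinct(1))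
  have hdv: "vs ! 0 = b" using assms(5) len by (metis hd_conv_nth list.size(3) nat.distinct(1))
  show ?thesis unfolding has_cycle_def
  proof (intro exI[of _ "es @ [e]"] exI[of _ vs] conjI allI impI)
    show "es @ [e] \<noteq> []" by simp
    show "length vs = length (es @ [e])" using len by simp
    show "distinct (es @ [e])" using d s assms(1) by auto
    show "distinct vs" by fact
    show "set (es @ [e]) \<subseteq> insert e F" using s by auto
    fix i assume i: "i < length (es @ [e])"
    show "ends ((es @ [e]) ! i) = {vs ! i, vs ! ((i + 1) mod length (es @ [e]))}"
    proof (cases "i < length es")
      case True
      then show ?thesis using ed by (simp add: nth_append)
    next
      case False
      then have "i = length es" using i by simp
      then show ?thesis using lastv hdv assms(2) by (simp add: nth_append insert_commute)
    qed
  qed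
qed

lemma cycle_loop:
  assumes "e \<in> F" "ends e = {a, a}"
  shows "has_cycle ends F"
  unfolding has_cycle_def
  by (rule exI[of _ "[e]"], rule exI[of _ "[a]"]) (use assms in auto)


lemma has_cycle_mono: "has_cycle ends F \<Longrightarrow> F \<subseteq> G \<Longrightarrow> has_cycle ends G"
  unfolding has_cycle_def by blast

lemma reach_refl: "x \<in> X \<Longrightarrow> (x, x) \<in> reach ends F X"
  unfolding reach_def by auto

lemma reach_trans: "(u, v) \<in> reach ends F X \<Longrightarrow> (v, w) \<in> reach ends F X \<Longrightarrow> (u, w) \<in> reach ends F X"
  unfolding reach_def by (auto intro: rtrancl_trans)

lemma reach_mono: "F \<subseteq> G \<Longrightarrow> reach ends F X \<subseteq> reach ends G X"
  unfolding reach_def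
proof (clarsimp)
  fix u w assume "F \<subseteq> G" "u \<in> X" "w \<in> X"
    "(u, w) \<in> {(a, b). a \<in> X \<and> b \<in> X \<and> (\<exists>e\<in>F. ends e = {a, b})}\<^sup>*"
  then show "(u, w) \<in> {(a, b). a \<in> X \<and> b \<in> X \<and> (\<exists>e\<in>G. ends e = {a, b})}\<^sup>*"
    by (rule_tac rtrancl_mono[THEN subsetD, rotated]) auto
qed

lemma quot_image: "X // R = (\<lambda>x. R `` {x}) ` X"
  unfolding quotient_def by auto


lemma quot_fewer:
  assumes fin: "finite X" and ab: "a \<in> X" "b \<in> X" "ends e = {a, b}"
    and nr: "(a, b) \<notin> reach ends F X"
  shows "card (X // reach ends (insert e F) X) < card (X // reach ends F X)"
proof -
  define R where "R = reach ends F X"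
  define R' where "R' = reach ends (insert e F) X"
  have sub: "R \<subseteq> R'" unfolding R_def R'_def by (rule reach_mono) auto
  have Rx: "R' `` (R `` {x}) = R' `` {x}" if "x \<in> X" for x
  proof
    show "R' `` (R `` {x}) \<subseteq> R' `` {x}"
      using sub unfolding R'_def by (auto intro: reach_trans)
    show "R' `` {x} \<subseteq> R' `` (R `` {x})"
      using reach_refl[OF that] unfolding R_def by auto
  qed
  have img: "X // R' = (\<lambda>Q. R' `` Q) ` (X // R)"
    using Rx unfolding quot_image image_image by auto
  have ba: "ends e = {b, a}" using ab(3) by blast
  have e1: "(a, b) \<in> R'" "(b, a) \<in> R'"
    unfolding R'_def reach_def using ab ba by (auto intro!: r_into_rtrancl)
  have "R' `` {a} = R' `` {b}"
    using e1 unfolding R'_def by (auto intro: reach_trans)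
  moreover have "R `` {a} \<noteq> R `` {b}"
  proof
    assume "R `` {a} = R `` {b}"
    moreover have "b \<in> R `` {b}" using reach_refl[OF ab(2)] unfolding R_def by auto
    ultimately show False using nr unfolding R_def by auto
  qed
  moreover have "R' `` (R `` {a}) = R' `` {a}" "R' `` (R `` {b}) = R' `` {b}"
    using Rx ab by auto
  moreover have "R `` {a} \<in> X // R" "R `` {b} \<in> X // R" using ab unfolding quot_image by auto
  ultimately have ni: "\<not> inj_on (\<lambda>Q. R' `` Q) (X // R)"
    unfolding inj_on_def by metis
  have finq: "finite (X // R)" using fin unfolding quot_image by simp
  have "card (X // R') \<le> card (X // R)" unfolding img by (rule card_image_le[OF finq])
  moreover have "card (X // R') \<noteq> card (X // R)"
  proof -
    have "card ((\<lambda>Q. R' `` Q) ` (X // R)) \<noteq> card (X // R)"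
      using ni inj_on_iff_eq_card[OF finq, of "\<lambda>Q. R' `` Q"] by blast
    then show ?thesis using img by simp
  qed
  ultimately show ?thesis unfolding R_def R'_def by simp
qed


lemma sym_path:
  assumes "(a, b) \<in> ({(x, y). x \<in> X \<and> y \<in> X \<and> (\<exists>e\<in>F. ends e = {x, y})})\<^sup>*"
  shows "(b, a) \<in> ({(x, y). x \<in> X \<and> y \<in> X \<and> (\<exists>e\<in>F. ends e = {x, y})})\<^sup>*"
  using assms
proof (induction rule: rtrancl_induct)
  case base then show ?case by simp
next
  case (step y z)
  then have "(z, y) \<in> {(x, y). x \<in> X \<and> y \<in> X \<and> (\<exists>e\<in>F. ends e = {x, y})}"
    by (auto simp: insert_commute)
  then show ?case using step(3) by (rule converse_rtrancl_into_rtrancl)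
qed

lemma forest_count:
  assumes "finite F" "finite X" "\<forall>e\<in>F. ends e \<subseteq> X \<and> (\<exists>a b. ends e = {a, b})"
    "\<not> has_cycle ends F"
  shows "card F + card (X // reach ends F X) \<le> card X"
  using assms
proof (induction F rule: finite_induct)
  case empty
  have "card (X // reach ends {} X) \<le> card X" unfolding quot_image by (rule card_image_le) fact
  then show ?case by simp
next
  case (insert e F)
  have acF: "\<not> has_cycle ends F" using insert.prems(3) has_cycle_mono by blast
  have IH: "card F + card (X // reach ends F X) \<le> card X" using insert acF by auto
  obtain a b where ab: "ends e = {a, b}" using insert.prems(2) by blast
  have abX: "a \<in> X" "b \<in> X" using insert.prems(2) ab by auto
  have nr: "(a, b) \<notin> reach ends F X"
  proof
    assume "(a, b) \<in> reach ends F X"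
    then have "(a, b) \<in> ({(x, y). x \<in> X \<and> y \<in> X \<and> (\<exists>e\<in>F. ends e = {x, y})})\<^sup>*"
      unfolding reach_def by auto
    then have "(b, a) \<in> ({(x, y). x \<in> X \<and> y \<in> X \<and> (\<exists>e\<in>F. ends e = {x, y})})\<^sup>*"
      by (rule sym_path)
    then obtain vs es where p: "spath ends F vs es" "hd vs = b" "last vs = a"
      using path_exists[where u=b and w=a and X=X and F=F and ends=ends] by blast
    show False
    proof (cases "a = b")
      case True
      then show False using cycle_loop[where e=e and F="insert e F" and a=a and ends=ends] ab insert.prems(3) by auto
    next
      case False
      then show False using cycle_from_path[OF insert.hyps(2) ab False p] insert.prems(3) by auto
    qed
  qed
  have "card (X // reach ends (insert e F) X) < card (X // reach ends F X)"
    by (rule quot_fewer[OF insert.prems(1) abX ab nr])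
  then show ?case using IH insert.hyps by simp
qed


lemma two_ends:
  assumes "finite S" "S \<noteq> {}" "card S \<le> 2"
  shows "\<exists>a b. S = {a, b}"
proof -
  have "card S = 1 \<or> card S = 2" using assms card_0_eq[OF assms(1)] by linarith
  then show ?thesis
  proof
    assume "card S = 1" then obtain a where "S = {a}" by (auto simp: card_Suc_eq)
    then show ?thesis by blast
  next
    assume "card S = 2" then show ?thesis by (auto simp: card_Suc_eq numeral_2_eq_2)
  qed
qed

lemma quot_ge1: "finite X \<Longrightarrow> X \<noteq> {} \<Longrightarrow> 1 \<le> card (X // R)"
  unfolding quot_image by (simp add: Suc_leI card_gt_0_iff)

lemma conn_from_card:
  assumes "card (X // reach ends F X) = 1" "X \<noteq> {}"
  shows "connected_on ends F X"
proof -
  obtain C where C: "X // reach ends F X = {C}" using assms(1) card_1_singletonE by blast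
  have "(w, u) \<in> reach ends F X" if "u \<in> X" "w \<in> X" for u w
  proof -
    have "reach ends F X `` {u} = C" "reach ends F X `` {w} = C"
      using C that unfolding quot_image by auto
    moreover have "u \<in> reach ends F X `` {u}" using reach_refl[OF that(1)] by auto
    ultimately show ?thesis by auto
  qed
  then show ?thesis unfolding connected_on_def using assms(2) by blast
qed

lemma induced_count:
  assumes mg: "multigraph V E ends" and X: "X \<subseteq> V" and A: "A \<subseteq> E" and ac: "\<not> has_cycle ends A"
  shows "card (induced ends A X) + card (X // reach ends (induced ends A X) X) \<le> card X"
proof (rule forest_count)
  have fE: "finite E" "finite V" using mg by (auto simp: multigraph_def)
  show "finite (induced ends A X)" using A fE unfolding induced_def by (auto intro: finite_subset)
  show "finite X" using X fE by (auto intro: finite_subset)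
  show "\<forall>e\<in>induced ends A X. ends e \<subseteq> X \<and> (\<exists>a b. ends e = {a, b})"
  proof
    fix e assume e: "e \<in> induced ends A X"
    then have "e \<in> E" "ends e \<subseteq> X" using A unfolding induced_def by auto
    then have "ends e \<subseteq> V" "ends e \<noteq> {}" "card (ends e) \<le> 2" using mg unfolding multigraph_def by auto
    moreover have "finite (ends e)" using \<open>ends e \<subseteq> V\<close> fE by (auto intro: finite_subset)
    ultimately show "ends e \<subseteq> X \<and> (\<exists>a b. ends e = {a, b})" using two_ends \<open>ends e \<subseteq> X\<close> by blast
  qed
  show "\<not> has_cycle ends (induced ends A X)"
    using ac has_cycle_mono[of ends "induced ends A X" A] unfolding induced_def by auto
qed

lemma pair_trees:
  assumes mg: "multigraph V E ends" and X: "X \<subseteq> V" and A: "A \<subseteq> E" and B: "B \<subseteq> E"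
    and acA: "\<not> has_cycle ends A" and acB: "\<not> has_cycle ends B" and dis: "A \<inter> B = {}"
    and sat: "saturated ends (A \<union> B) X"
  shows "is_tree ends (induced ends A X) X \<and> is_tree ends (induced ends B X) X \<and>
         induced ends A X \<inter> induced ends B X = {}"
proof -
  have fE: "finite E" "finite V" using mg by (auto simp: multigraph_def)
  have fX: "finite X" using X fE by (auto intro: finite_subset)
  have finA: "finite (induced ends A X)" "finite (induced ends B X)"
    using A B fE unfolding induced_def by (auto intro: finite_subset)
  have disI: "induced ends A X \<inter> induced ends B X = {}" using dis unfolding induced_def by auto
  have un: "induced ends (A \<union> B) X = induced ends A X \<union> induced ends B X"
    unfolding induced_def by auto
  have cs: "card (induced ends (A \<union> B) X) = card (induced ends A X) + card (induced ends B X)"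
    unfolding un by (rule card_Un_disjoint[OF finA disI])
  have Xne: "X \<noteq> {}"
  proof
    assume "X = {}"
    then show False using sat unfolding saturated_def by simp
  qed
  have cA: "card (induced ends A X) + card (X // reach ends (induced ends A X) X) \<le> card X"
    by (rule induced_count[OF mg X A acA])
  have cB: "card (induced ends B X) + card (X // reach ends (induced ends B X) X) \<le> card X"
    by (rule induced_count[OF mg X B acB])
  have qA: "1 \<le> card (X // reach ends (induced ends A X) X)" by (rule quot_ge1[OF fX Xne])
  have qB: "1 \<le> card (X // reach ends (induced ends B X) X)" by (rule quot_ge1[OF fX Xne])
  have "int (card (induced ends A X)) + int (card (induced ends B X)) = 2 * int (card X) - 2"
    using sat cs unfolding saturated_def by simp
  then have eqA: "card (X // reach ends (induced ends A X) X) = 1"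
    and eqB: "card (X // reach ends (induced ends B X) X) = 1"
    using cA cB qA qB by linarith+
  have sub: "is_subgraph_on ends (induced ends A X) X" "is_subgraph_on ends (induced ends B X) X"
    unfolding is_subgraph_on_def induced_def by auto
  have "\<not> has_cycle ends (induced ends A X)" "\<not> has_cycle ends (induced ends B X)"
    using acA acB has_cycle_mono[of ends "induced ends A X" A] has_cycle_mono[of ends "induced ends B X" B]
    unfolding induced_def by auto
  then show ?thesis
    using sub conn_from_card[OF eqA Xne] conn_from_card[OF eqB Xne] disI
    unfolding is_tree_def by blast
qed

lemma assoc_inv:
  assumes "(h0, h) \<in> (exch_edges V E ends)\<^sup>*"
  shows "assoc_edges h = assoc_edges h0"
  using assms
proof (induction rule: rtrancl_induct)
  case base then show ?case by simp
next
  case (step y z)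
  from step(2) have "assoc_edges z = assoc_edges y"
    unfolding exch_edges_def exch_adj12_def assoc_edges_def vpair_def
    by (auto split: prod.splits)
  then show ?case using step(3) by simp
qed

lemma verts_pair:
  assumes "h \<in> exch_verts V E ends"
  shows "\<exists>A B. vpair h = (A, B) \<and> A \<subseteq> E \<and> B \<subseteq> E \<and> \<not> has_cycle ends A \<and>
           \<not> has_cycle ends B \<and> A \<inter> B = {}"
  using assms unfolding exch_verts_def vpair_def spanning_trees_def spanning_2forests_def is_tree_def
  by auto

theorem lemma2p6:
  fixes V :: "'v set" and E :: "'e set" and ends :: "'e \<Rightarrow> 'v set"
    and h0 :: "'e exvert" and X :: "'v set"
  assumes "multigraph V E ends"
    and "connected_on ends E V"
    and "h0 \<in> exch_verts V E ends"
    and "X \<subseteq> V"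
    and "saturated ends (assoc_edges h0) X"
  shows "\<forall>h \<in> exch_component V E ends h0.
           is_tree ends (induced ends (fst (vpair h)) X) X \<and>
           is_tree ends (induced ends (snd (vpair h)) X) X \<and>
           induced ends (fst (vpair h)) X \<inter> induced ends (snd (vpair h)) X = {}"
proof
  fix h assume h: "h \<in> exch_component V E ends h0"
  then have hv: "h \<in> exch_verts V E ends" and hr: "(h0, h) \<in> (exch_edges V E ends)\<^sup>*"
    unfolding exch_component_def by auto
  obtain A B where AB: "vpair h = (A, B)" "A \<subseteq> E" "B \<subseteq> E" "\<not> has_cycle ends A"
    "\<not> has_cycle ends B" "A \<inter> B = {}" using verts_pair[OF hv] by blast
  have "assoc_edges h = A \<union> B" using AB(1) unfolding assoc_edges_def by simp
  then have sat: "saturated ends (A \<union> B) X" using assoc_inv[OF hr] assms(5) by simp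
  show "is_tree ends (induced ends (fst (vpair h)) X) X \<and>
           is_tree ends (induced ends (snd (vpair h)) X) X \<and>
           induced ends (fst (vpair h)) X \<inter> induced ends (snd (vpair h)) X = {}"
    using pair_trees[OF assms(1) assms(4) AB(2-6) sat] AB(1) by simp
qed


end
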